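(* Let $p,q\ge2$ and $m\ge3$ be integers with $p=q$ whenever $m$ is odd. Define $c=-\cos(\pi/m)$ and $\alpha=-\left(\frac{\cos(\pi/p-\pi/q)+\cos(2\pi/m)}{2\sin(\pi/p)\sin(\pi/q)}\right)^{1/2}$. Then $\alpha\le c$. *)

theory Defs
  imports Complex_Main
begin

end

theory Submission
  imports Defs
begin

theorem lemma2p4:
  fixes p q m :: nat
  assumes "p \<ge> 2" and "q \<ge> 2" and "m \<ge> 3"
    and "odd m \<Longrightarrow> p = q"
  shows "- sqrt ((cos (pi / real p - pi / real q) + cos (2 * pi / real m))
                 / (2 * sin (pi / real p) * sin (pi / real q)))
         \<le> - cos (pi / real m)"
proof -
  define a where "a = pi / real p"
  define b where "b = pi / real q"
  define g where "g = pi / real m"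
  have rp: "real p \<ge> 2" "real q \<ge> 2" "real m \<ge> 3" using assms by auto
  have a0: "0 < a" "a \<le> pi/2" unfolding a_def using rp pi_gt_zero
    by (auto simp: field_simps)
  have b0: "0 < b" "b \<le> pi/2" unfolding b_def using rp pi_gt_zero
    by (auto simp: field_simps)
  have g0: "0 < g" "g \<le> pi/3" unfolding g_def using rp pi_gt_zero
    by (auto simp: field_simps)
  have sa: "sin a > 0" using a0 by (intro sin_gt_zero) auto
  have sb: "sin b > 0" using b0 by (intro sin_gt_zero) auto
  have ca: "cos a \<ge> 0" using a0 by (intro cos_ge_zero) auto
  have cb: "cos b \<ge> 0" using b0 by (intro cos_ge_zero) auto
  have cg: "cos g > 0" using g0 by (intro cos_gt_zero) auto
  have sa1: "sin a \<le> 1" "sin b \<le> 1" by auto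
  have prod1: "sin a * sin b \<le> 1" using sa sb sa1 by (meson less_le mult_le_one)
  have key: "cos a * cos b + cos (2*g) * (1 - sin a * sin b) \<ge> 0"
  proof (cases "m = 3")
    case True
    then have "p = q" using assms(4) by auto
    then have ab: "a = b" unfolding a_def b_def by simp
    have "g = pi/3" using True unfolding g_def by simp
    then have "cos g = 1/2" by (simp only: cos_60)
    then have "cos (2*g) = 2 * (1/2)^2 - 1" unfolding cos_double_cos by simp
    then have "cos (2*g) = - 1/2" by (simp add: power2_eq_square)
    have e1: "sin a * sin a + cos a * cos a = 1" using sin_cos_squared_add[of a] by (simp add: power2_eq_square)
    have e2: "cos a * cos a \<ge> 0" by simp
    have e3: "1 - sin a * sin a = cos a * cos a" using e1 by (metis add_diff_cancel_left')
    have "cos a * cos b + cos (2*g) * (1 - sin a * sin b) = cos a * cos a - (1 - sin a * sin a) / 2"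
      using ab \<open>cos (2*g) = - 1/2\<close> by simp
    also have "\<dots> = cos a * cos a / 2" unfolding e3 by simp
    finally show ?thesis using e2 by linarith
  next
    case False
    then have "real m \<ge> 4" using assms(3) by auto
    then have "2*g \<le> pi/2" unfolding g_def using pi_gt_zero by (auto simp: field_simps)
    then have "cos (2*g) \<ge> 0" using g0 by (intro cos_ge_zero) auto
    then show ?thesis using ca cb prod1 by (simp add: mult_nonneg_nonneg)
  qed
  define D where "D = 2 * sin a * sin b"
  have D0: "D > 0" unfolding D_def using sa sb by simp
  have num: "cos (a - b) + cos (2*g) \<ge> (cos g)^2 * D"
    using key unfolding D_def cos_diff cos_double_cos
    by (simp add: algebra_simps power2_eq_square)
  have "(cos g)^2 \<le> (cos (a - b) + cos (2*g)) / D"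
    using num D0 by (simp add: pos_le_divide_eq)
  then have "sqrt ((cos g)^2) \<le> sqrt ((cos (a - b) + cos (2*g)) / D)"
    using real_sqrt_le_mono by blast
  then have "cos g \<le> sqrt ((cos (a - b) + cos (2*g)) / D)" using cg by simp
  moreover have "2 * pi / real m = 2 * g" unfolding g_def by simp
  ultimately show ?thesis unfolding a_def [symmetric] b_def [symmetric] g_def [symmetric] D_def
    by (simp add: mult.assoc)
qed

end
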